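(* Let $\mathsf{L}$ be a logic, $\mathsf{L}'$ a fragment of $\mathsf{L}$, $\mathcal{C}$ a class of $\mathsf{L}$-models and $\Theta$ an $(\mathsf{L},\mathcal{C})$-pair. Let $\mathcal{S}\subseteq\mathcal{C}$ be a finite set of $\mathsf{L}$-models and $\mathcal{R}\subseteq\mathsf{Fm}^f_{\mathsf{L}}$ an $(\mathsf{L},\mathcal{S})$-learning property. If some (final) $\mathsf{L}'$-formula belongs to $\mathcal{R}$, then some $\mathsf{L}'$-formula $\psi\in\mathcal{R}$ satisfies $\mathsf{sz}(\psi)\le\sum_{\tau\in\mathcal{T}}\prod_{M\in\mathcal{S}}|\mathsf{SEM}_M(\tau)|$.
   Context: A logic $\mathsf{L}$ is given by $(\mathcal{T},\mathcal{T}_f,\mathsf{Op},(\tau_o)_{o\in\mathsf{Op}},T)$: a non-empty finite set $\mathcal{T}$ of types, final types $\emptyset\ne\mathcal{T}_f\subseteq\mathcal{T}$, operators $\mathsf{Op}=\mathsf{Op}_0\uplus\mathsf{Op}_1\uplus\mathsf{Op}_2$ (by arity) with $\mathsf{Op}_0\ne\emptyset$, each $o$ having a type $\tau_o$ and allowed argument-type sets $T(o,i)\subseteq\mathcal{T}$. Formulas of type $\tau$ ($\mathsf{Fm}_{\mathsf{L}}(\tau)$) are built inductively: $o\in\mathsf{Op}_0$ has type $\tau_o$; $o(\varphi_1)$, resp. $o(\varphi_1,\varphi_2)$, has type $\tau_o$ when each $\varphi_i$ has a type in $T(o,i)$. $\mathsf{Fm}_{\mathsf{L}}(X)=\bigcup_{\tau\in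 X}\mathsf{Fm}_{\mathsf{L}}(\tau)$, final formulas $\mathsf{Fm}^f_{\mathsf{L}}=\mathsf{Fm}_{\mathsf{L}}(\mathcal{T}_f)$. A fragment $\mathsf{L}'$ uses the same syntax with an operator set $\mathsf{Op}'\subseteq\mathsf{Op}$. $\mathsf{sz}(\varphi)$ is the number of distinct subformulas of $\varphi$. An $\mathsf{L}$-model $M$ has a satisfaction relation $M\models\varphi$ for final formulas; a class of models is a set of them. An $(\mathsf{L},\mathcal{S})$-learning property is a set $\mathcal{R}\subseteq\mathsf{Fm}^f_{\mathsf{L}}$ such that, with $\mathcal{R}_{\mathcal{S}}=\{\{M\in\mathcal{S}: M\models\varphi\}:\varphi\in\mathcal{R}\}$, every final formula $\varphi$ satisfies: $\{M\in\mathcal{S}:M\models\varphi\}\in\mathcal{R}_{\mathcal{S}}$ iff $\varphi\in\mathcal{R}$. An $(\mathsf{L},M)$-pair: a finite set $\mathsf{SEM}_M=\bigcup_\tau\mathsf{SEM}_M(\tau)$ with pairwise disjoint parts and $\mathsf{sem}_M:\mathsf{Fm}_{\mathsf{L}}\to\mathsf{SEM}_M$ sending type-$\tau$ formulas into $\mathsf{SEM}_M(\tau)$; $\mathsf{SEM}_M(X)=\bigcup_{\tau\in X}\mathsf{SEM}_M(\tau)$. It captures the $\mathsf{L}$-semantics if final formulas of the same type with the same $\mathsf{sem}_M$-value are either both satisfied or both not satisfied by $M$. It satisfies the inductive property if for every $o\in\mathsf{Op}_1$ there is $\mathsf{sem}^o_M:\mathsf{SEM}_M(T(o,1))\to\mathsf{SEM}_M(\tau_o)$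 with $\mathsf{sem}_M(o(\varphi_1))=\mathsf{sem}^o_M(\mathsf{sem}_M(\varphi_1))$ for all $\varphi_1\in\mathsf{Fm}_{\mathsf{L}}(T(o,1))$, and for every $o\in\mathsf{Op}_2$ there is $\mathsf{sem}^o_M:\mathsf{SEM}_M(T(o,1))\times\mathsf{SEM}_M(T(o,2))\to\mathsf{SEM}_M(\tau_o)$ with $\mathsf{sem}_M(o(\varphi_1,\varphi_2))=\mathsf{sem}^o_M(\mathsf{sem}_M(\varphi_1),\mathsf{sem}_M(\varphi_2))$. An $(\mathsf{L},\mathcal{C})$-pair is a family $(\Theta_M)_{M\in\mathcal{C}}$ of $(\mathsf{L},M)$-pairs $\Theta_M=(\mathsf{SEM}_M,\mathsf{sem}_M)$ each capturing the $\mathsf{L}$-semantics and satisfying the inductive property. *)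

theory Defs
  imports Main
begin

datatype 'c fm = Atom 'c | Una 'c "'c fm" | Bina 'c "'c fm" "'c fm"

record ('ty, 'c) logic =
  types :: "'ty set"
  ftypes :: "'ty set"
  ops0 :: "'c set"
  ops1 :: "'c set"
  ops2 :: "'c set"
  otype :: "'c \<Rightarrow> 'ty"
  argT :: "'c \<Rightarrow> nat \<Rightarrow> 'ty set"

definition ops :: "('ty, 'c) logic \<Rightarrow> 'c set" where
  "ops L = ops0 L \<union> ops1 L \<union> ops2 L"

definition is_logic :: "('ty, 'c) logic \<Rightarrow> bool" where
  "is_logic L \<longleftrightarrow>
     finite (types L) \<and> types L \<noteq> {} \<and>
     ftypes L \<noteq> {} \<and> ftypes L \<subseteq> types L \<and>
     ops0 L \<noteq> {} \<and>
     ops0 L \<inter> ops1 L = {} \<and> ops0 L \<inter> ops2 L = {} \<and> ops1 L \<inter> ops2 L = {} \<and>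
     (\<forall>c\<in>ops L. otype L c \<in> types L) \<and>
     (\<forall>c\<in>ops1 L. argT L c 1 \<subseteq> types L) \<and>
     (\<forall>c\<in>ops2 L. argT L c 1 \<subseteq> types L \<and> argT L c 2 \<subseteq> types L)"

fun has_type :: "('ty, 'c) logic \<Rightarrow> 'c fm \<Rightarrow> 'ty \<Rightarrow> bool" where
  "has_type L (Atom c) \<tau> \<longleftrightarrow> c \<in> ops0 L \<and> otype L c = \<tau>"
| "has_type L (Una c \<phi>) \<tau> \<longleftrightarrow> c \<in> ops1 L \<and> otype L c = \<tau> \<and>
     (\<exists>\<sigma>\<in>argT L c 1. has_type L \<phi> \<sigma>)"
| "has_type L (Bina c \<phi> \<psi>) \<tau> \<longleftrightarrow> c \<in> ops2 L \<and> otype L c = \<tau> \<and>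
     (\<exists>\<sigma>\<in>argT L c 1. has_type L \<phi> \<sigma>) \<and> (\<exists>\<sigma>\<in>argT L c 2. has_type L \<psi> \<sigma>)"

definition Fm :: "('ty, 'c) logic \<Rightarrow> 'ty set \<Rightarrow> 'c fm set" where
  "Fm L X = {\<phi>. \<exists>\<tau>\<in>X. has_type L \<phi> \<tau>}"

definition Fm_final :: "('ty, 'c) logic \<Rightarrow> 'c fm set" where
  "Fm_final L = Fm L (ftypes L)"

definition fragment :: "('ty, 'c) logic \<Rightarrow> 'c set \<Rightarrow> ('ty, 'c) logic" where
  "fragment L Op' = L\<lparr>ops0 := ops0 L \<inter> Op', ops1 := ops1 L \<inter> Op', ops2 := ops2 L \<inter> Op'\<rparr>"

definition is_fragment_ops :: "('ty, 'c) logic \<Rightarrow> 'c set \<Rightarrow> bool" where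
  "is_fragment_ops L Op' \<longleftrightarrow> Op' \<subseteq> ops L \<and> is_logic (fragment L Op')"

fun subformulas :: "'c fm \<Rightarrow> 'c fm set" where
  "subformulas (Atom c) = {Atom c}"
| "subformulas (Una c \<phi>) = insert (Una c \<phi>) (subformulas \<phi>)"
| "subformulas (Bina c \<phi> \<psi>) = insert (Bina c \<phi> \<psi>) (subformulas \<phi> \<union> subformulas \<psi>)"

definition sz :: "'c fm \<Rightarrow> nat" where
  "sz \<phi> = card (subformulas \<phi>)"

definition ext :: "('m \<Rightarrow> 'c fm \<Rightarrow> bool) \<Rightarrow> 'm set \<Rightarrow> 'c fm \<Rightarrow> 'm set" where
  "ext sat S \<phi> = {M\<in>S. sat M \<phi>}"

definition learning_property ::
  "('ty, 'c) logic \<Rightarrow> ('m \<Rightarrow> 'c fm \<Rightarrow> bool) \<Rightarrow> 'm set \<Rightarrow> 'c fm set \<Rightarrow> bool" where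
  "learning_property L sat S R \<longleftrightarrow>
     R \<subseteq> Fm_final L \<and>
     (\<forall>\<phi>\<in>Fm_final L. ext sat S \<phi> \<in> ext sat S ` R \<longleftrightarrow> \<phi> \<in> R)"

definition SEMs :: "('ty \<Rightarrow> 's set) \<Rightarrow> 'ty set \<Rightarrow> 's set" where
  "SEMs SEMM X = (\<Union>\<tau>\<in>X. SEMM \<tau>)"

definition LM_pair :: "('ty, 'c) logic \<Rightarrow> ('ty \<Rightarrow> 's set) \<Rightarrow> ('c fm \<Rightarrow> 's) \<Rightarrow> bool" where
  "LM_pair L SEMM semM \<longleftrightarrow>
     finite (SEMs SEMM (types L)) \<and>
     (\<forall>\<tau>\<in>types L. \<forall>\<tau>'\<in>types L. \<tau> \<noteq> \<tau>' \<longrightarrow> SEMM \<tau> \<inter> SEMM \<tau>' = {}) \<and>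
     (\<forall>\<tau>\<in>types L. \<forall>\<phi>. has_type L \<phi> \<tau> \<longrightarrow> semM \<phi> \<in> SEMM \<tau>)"

definition captures_semantics ::
  "('ty, 'c) logic \<Rightarrow> ('c fm \<Rightarrow> bool) \<Rightarrow> ('c fm \<Rightarrow> 's) \<Rightarrow> bool" where
  "captures_semantics L satM semM \<longleftrightarrow>
     (\<forall>\<tau>\<in>ftypes L. \<forall>\<phi> \<psi>. has_type L \<phi> \<tau> \<and> has_type L \<psi> \<tau> \<and> semM \<phi> = semM \<psi> \<longrightarrow>
        (satM \<phi> \<longleftrightarrow> satM \<psi>))"

definition inductive_property ::
  "('ty, 'c) logic \<Rightarrow> ('ty \<Rightarrow> 's set) \<Rightarrow> ('c fm \<Rightarrow> 's) \<Rightarrow> bool" where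
  "inductive_property L SEMM semM \<longleftrightarrow>
     (\<forall>c\<in>ops1 L. \<exists>f :: 's \<Rightarrow> 's.
        f ` SEMs SEMM (argT L c 1) \<subseteq> SEMM (otype L c) \<and>
        (\<forall>\<phi>\<in>Fm L (argT L c 1). semM (Una c \<phi>) = f (semM \<phi>))) \<and>
     (\<forall>c\<in>ops2 L. \<exists>f :: 's \<Rightarrow> 's \<Rightarrow> 's.
        (\<forall>a\<in>SEMs SEMM (argT L c 1). \<forall>b\<in>SEMs SEMM (argT L c 2). f a b \<in> SEMM (otype L c)) \<and>
        (\<forall>\<phi>\<in>Fm L (argT L c 1). \<forall>\<psi>\<in>Fm L (argT L c 2).
           semM (Bina c \<phi> \<psi>) = f (semM \<phi>) (semM \<psi>)))"

definition LC_pair ::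
  "('ty, 'c) logic \<Rightarrow> ('m \<Rightarrow> 'c fm \<Rightarrow> bool) \<Rightarrow> 'm set \<Rightarrow>
   ('m \<Rightarrow> 'ty \<Rightarrow> 's set) \<Rightarrow> ('m \<Rightarrow> 'c fm \<Rightarrow> 's) \<Rightarrow> bool" where
  "LC_pair L sat C SEM sem \<longleftrightarrow>
     (\<forall>M\<in>C. LM_pair L (SEM M) (sem M) \<and>
             captures_semantics L (sat M) (sem M) \<and>
             inductive_property L (SEM M) (sem M))"

end

theory Submission
  imports Defs "HOL-Library.FuncSet"
begin

fun hd_op :: "'c fm \<Rightarrow> 'c" where
  "hd_op (Atom c) = c" | "hd_op (Una c x) = c" | "hd_op (Bina c x y) = c"

fun rep :: "'c fm \<Rightarrow> 'c fm \<Rightarrow> 'c fm \<Rightarrow> 'c fm" where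
  "rep a b (Atom c) = (if Atom c = a then b else Atom c)"
| "rep a b (Una c x) = (if Una c x = a then b else Una c (rep a b x))"
| "rep a b (Bina c x y) = (if Bina c x y = a then b else Bina c (rep a b x) (rep a b y))"

lemma sub_self: "x \<in> subformulas x"
  by (cases x) auto

lemma sub_trans: "x \<in> subformulas y \<Longrightarrow> subformulas x \<subseteq> subformulas y"
  by (induction y) auto

lemma sub_finite: "finite (subformulas x)"
  by (induction x) auto

lemma sub_size: "x \<in> subformulas y \<Longrightarrow> x = y \<or> size x < size y"
  by (induction y) auto

lemma rep_id: "a \<notin> subformulas t \<Longrightarrow> rep a b t = t"
  by (induction t) (auto simp: sub_self)

lemma rep_sub:
  assumes "a \<notin> subformulas b"
  shows "subformulas (rep a b t) \<subseteq> rep a b ` (subformulas t \<union> subformulas b)"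
proof (induction t)
  case (Atom c)
  have "subformulas b \<subseteq> rep a b ` subformulas b"
  proof
    fix x assume "x \<in> subformulas b"
    then have "a \<notin> subformulas x" using assms sub_trans by blast
    then have "rep a b x = x" by (rule rep_id)
    then show "x \<in> rep a b ` subformulas b" using \<open>x \<in> subformulas b\<close> by force
  qed
  then show ?case by auto
next
  case (Una c x)
  have "subformulas b \<subseteq> rep a b ` subformulas b"
  proof
    fix x assume "x \<in> subformulas b"
    then have "a \<notin> subformulas x" using assms sub_trans by blast
    then have "rep a b x = x" by (rule rep_id)
    then show "x \<in> rep a b ` subformulas b" using \<open>x \<in> subformulas b\<close> by force
  qed
  then show ?case using Una by (cases "Una c x = a"; auto)
next
  case (Bina c x y)
  have "subformulas b \<subseteq> rep a b ` subformulas b"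
  proof
    fix x assume "x \<in> subformulas b"
    then have "a \<notin> subformulas x" using assms sub_trans by blast
    then have "rep a b x = x" by (rule rep_id)
    then show "x \<in> rep a b ` subformulas b" using \<open>x \<in> subformulas b\<close> by force
  qed
  then show ?case using Bina by (cases "Bina c x y = a"; auto)
qed

lemma type_head: "has_type L t s \<Longrightarrow> s = otype L (hd_op t)"
  by (cases t) auto

lemma rep_type:
  assumes "has_type L a s0" "has_type L b s0"
  shows "has_type L t s \<Longrightarrow> has_type L (rep a b t) s"
proof (induction t arbitrary: s)
  case (Atom c)
  then show ?case using assms type_head by (metis rep.simps(1))
next
  case (Una c x)
  show ?case
  proof (cases "Una c x = a")
    case True
    then show ?thesis using assms Una.prems type_head by (metis rep.simps(2))
  next
    case False
    then show ?thesis using Una by auto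
  qed
next
  case (Bina c x y)
  show ?case
  proof (cases "Bina c x y = a")
    case True
    then show ?thesis using assms Bina.prems type_head by (metis rep.simps(3))
  next
    case False
    then show ?thesis using Bina by auto
  qed
qed

lemma frag_type: "has_type (fragment L Op') t s \<Longrightarrow> has_type L t s"
  by (induction t arbitrary: s) (auto simp: fragment_def)

lemma rep_sem:
  assumes ip: "inductive_property L SEMM semM"
    and "has_type L a s0" "has_type L b s0" and ab: "semM a = semM b"
  shows "has_type L t s \<Longrightarrow> semM (rep a b t) = semM t"
proof (induction t arbitrary: s)
  case (Atom c)
  then show ?case using ab by simp
next
  case (Una c x)
  show ?case
  proof (cases "Una c x = a")
    case True then show ?thesis using True[symmetric] ab by simp
  next
    case False
    from Una.prems obtain sg where c: "c \<in> ops1 L" and sg: "sg \<in> argT L c 1" "has_type L x sg" by auto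
    have ip1: "\<forall>c\<in>ops1 L. \<exists>f.
        f ` SEMs SEMM (argT L c 1) \<subseteq> SEMM (otype L c) \<and>
        (\<forall>\<phi>\<in>Fm L (argT L c 1). semM (Una c \<phi>) = f (semM \<phi>))"
      using ip unfolding inductive_property_def by (rule conjunct1)
    obtain f where f: "\<forall>\<phi>\<in>Fm L (argT L c 1). semM (Una c \<phi>) = f (semM \<phi>)"
      using bspec[OF ip1 c] by (elim exE conjE)
    have r: "has_type L (rep a b x) sg" using rep_type[OF assms(2,3) sg(2)] .
    have m1: "rep a b x \<in> Fm L (argT L c 1)" unfolding Fm_def using r sg(1) by blast
    have m2: "x \<in> Fm L (argT L c 1)" unfolding Fm_def using sg(2) sg(1) by blast
    have ih: "semM (rep a b x) = semM x" using Una.IH[OF sg(2)] .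
    have "semM (Una c (rep a b x)) = f (semM (rep a b x))" using bspec[OF f m1] .
    also have "\<dots> = f (semM x)" using ih by (rule arg_cong)
    also have "\<dots> = semM (Una c x)" using bspec[OF f m2] by (rule sym)
    finally show ?thesis using False by simp
  qed
next
  case (Bina c x y)
  show ?case
  proof (cases "Bina c x y = a")
    case True then show ?thesis using True[symmetric] ab by simp
  next
    case False
    from Bina.prems obtain sg sh where c: "c \<in> ops2 L" and sg: "sg \<in> argT L c 1" "has_type L x sg"
      and sh: "sh \<in> argT L c 2" "has_type L y sh" by auto
    have ip2: "\<forall>c\<in>ops2 L. \<exists>f.
        (\<forall>a\<in>SEMs SEMM (argT L c 1). \<forall>b\<in>SEMs SEMM (argT L c 2). f a b \<in> SEMM (otype L c)) \<and>
        (\<forall>\<phi>\<in>Fm L (argT L c 1). \<forall>\<psi>\<in>Fm L (argT L c 2).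
           semM (Bina c \<phi> \<psi>) = f (semM \<phi>) (semM \<psi>))"
      using ip unfolding inductive_property_def by (rule conjunct2)
    obtain f where f: "\<forall>\<phi>\<in>Fm L (argT L c 1). \<forall>\<psi>\<in>Fm L (argT L c 2).
           semM (Bina c \<phi> \<psi>) = f (semM \<phi>) (semM \<psi>)"
      using bspec[OF ip2 c] by (elim exE conjE)
    have r: "has_type L (rep a b x) sg" using rep_type[OF assms(2,3) sg(2)] .
    have r2: "has_type L (rep a b y) sh" using rep_type[OF assms(2,3) sh(2)] .
    have m1: "rep a b x \<in> Fm L (argT L c 1)" unfolding Fm_def using r sg(1) by blast
    have m2: "x \<in> Fm L (argT L c 1)" unfolding Fm_def using sg(2) sg(1) by blast
    have m3: "rep a b y \<in> Fm L (argT L c 2)" unfolding Fm_def using r2 sh(1) by blast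
    have m4: "y \<in> Fm L (argT L c 2)" unfolding Fm_def using sh(2) sh(1) by blast
    have ih1: "semM (rep a b x) = semM x" using Bina.IH(1)[OF sg(2)] .
    have ih2: "semM (rep a b y) = semM y" using Bina.IH(2)[OF sh(2)] .
    have "semM (Bina c (rep a b x) (rep a b y)) = f (semM (rep a b x)) (semM (rep a b y))"
      using bspec[OF bspec[OF f m1] m3] .
    also have "\<dots> = f (semM x) (semM y)" using ih1 ih2 by simp
    also have "\<dots> = semM (Bina c x y)" using bspec[OF bspec[OF f m2] m4] by (rule sym)
    finally show ?thesis using False by simp
  qed
qed

lemma sub_typed0: "has_type L t s \<Longrightarrow> \<forall>x\<in>subformulas t. \<exists>s'. has_type L x s'"
proof (induction t arbitrary: s)
  case (Atom c)
  then show ?case by auto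
next
  case (Una c y)
  then obtain sg where "has_type L y sg" by auto
  then show ?case using Una by (metis insert_iff subformulas.simps(2))
next
  case (Bina c y z)
  then obtain sg sh where "has_type L y sg" "has_type L z sh" by auto
  then show ?case using Bina by (metis Un_iff insert_iff subformulas.simps(3))
qed

lemma sub_typed: "has_type L t s \<Longrightarrow> x \<in> subformulas t \<Longrightarrow> \<exists>s'. has_type L x s'"
  using sub_typed0 by metis

lemma typed_in_types: "is_logic L \<Longrightarrow> has_type L t s \<Longrightarrow> s \<in> types L"
  by (cases t) (auto simp: is_logic_def ops_def)

lemma card_lt_rep:
  assumes "a \<in> A" "b \<in> A" "a \<noteq> b" "f a = f b" "finite A"
  shows "card (f ` A) < card A"
proof -
  have "f ` A = f ` (A - {a})"
  proof
    show "f ` A \<subseteq> f ` (A - {a})"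
    proof
      fix z assume "z \<in> f ` A"
      then obtain x where x: "x \<in> A" "z = f x" by blast
      show "z \<in> f ` (A - {a})"
      proof (cases "x = a")
        case True
        have "b \<in> A - {a}" using assms by blast
        moreover have "z = f b" using x True assms by simp
        ultimately show ?thesis by blast
      next
        case False
        then show ?thesis using x by blast
      qed
    qed
  qed blast
  then have "card (f ` A) \<le> card (A - {a})" by (metis card_image_le assms(5) finite_Diff)
  also have "\<dots> < card A" using assms by (meson card_Diff1_less)
  finally show ?thesis .
qed

lemma frag_simps: "ftypes (fragment L Op') = ftypes L" "types (fragment L Op') = types L"
  "otype (fragment L Op') = otype L"
  by (auto simp: fragment_def)

lemma reduce:
  assumes lp: "learning_property L sat S R"
    and lc: "LC_pair L sat C SEM sem" and SC: "S \<subseteq> C"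
    and psi: "\<psi> \<in> R" "has_type (fragment L Op') \<psi> tf" "tf \<in> ftypes L"
    and ab: "a \<in> subformulas \<psi>" "b \<in> subformulas \<psi>" "a \<noteq> b" "a \<notin> subformulas b"
    and ty: "otype L (hd_op a) = otype L (hd_op b)"
    and se: "\<forall>M\<in>S. sem M a = sem M b"
  shows "rep a b \<psi> \<in> R \<and> has_type (fragment L Op') (rep a b \<psi>) tf \<and> sz (rep a b \<psi>) < sz \<psi>"
proof -
  let ?L = "fragment L Op'"
  obtain sa where sa: "has_type ?L a sa" using sub_typed[OF psi(2) ab(1)] by blast
  obtain sb where sb: "has_type ?L b sb" using sub_typed[OF psi(2) ab(2)] by blast
  have "sa = sb" using type_head[OF sa] type_head[OF sb] ty by (simp add: frag_simps)
  then have sb': "has_type ?L b sa" using sb by simp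
  have t1: "has_type ?L (rep a b \<psi>) tf" using rep_type[OF sa sb' psi(2)] .
  have saL: "has_type L a sa" "has_type L b sa" using frag_type[OF sa] frag_type[OF sb'] by auto
  have psiL: "has_type L \<psi> tf" "has_type L (rep a b \<psi>) tf" using frag_type[OF psi(2)] frag_type[OF t1] by auto
  have ext_eq: "ext sat S (rep a b \<psi>) = ext sat S \<psi>"
  proof -
    have "sat M (rep a b \<psi>) = sat M \<psi>" if "M \<in> S" for M
    proof -
      have M: "M \<in> C" using that SC by blast
      have ip: "inductive_property L (SEM M) (sem M)" and cs: "captures_semantics L (sat M) (sem M)"
        using lc M unfolding LC_pair_def by auto
      have "sem M (rep a b \<psi>) = sem M \<psi>" using rep_sem[OF ip saL] se that psiL(1) by blast
      then show ?thesis using cs psiL psi(3) unfolding captures_semantics_def by blast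
    qed
    then show ?thesis unfolding ext_def by auto
  qed
  have "rep a b \<psi> \<in> Fm_final L" using psiL psi(3) unfolding Fm_final_def Fm_def by blast
  moreover have "ext sat S (rep a b \<psi>) \<in> ext sat S ` R" using ext_eq psi(1) by auto
  ultimately have inR: "rep a b \<psi> \<in> R" using lp unfolding learning_property_def by blast
  have "subformulas (rep a b \<psi>) \<subseteq> rep a b ` (subformulas \<psi> \<union> subformulas b)"
    using rep_sub[OF ab(4)] .
  also have "\<dots> = rep a b ` subformulas \<psi>" using sub_trans[OF ab(2)] by (simp add: Un_absorb2)
  finally have sub: "subformulas (rep a b \<psi>) \<subseteq> rep a b ` subformulas \<psi>" .
  have ra: "rep a b a = b" by (cases a) auto
  have rb: "rep a b b = b" using rep_id ab(4) by blast
  have "card (subformulas (rep a b \<psi>)) \<le> card (rep a b ` subformulas \<psi>)"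
    using sub by (simp add: card_mono sub_finite)
  also have "\<dots> < card (subformulas \<psi>)"
    using card_lt_rep[OF ab(1,2,3)] ra rb sub_finite by metis
  finally show ?thesis using inR t1 unfolding sz_def by blast
qed

theorem proposition6:
  fixes L :: "('ty, 'c) logic"
    and Op' :: "'c set"
    and sat :: "'m \<Rightarrow> 'c fm \<Rightarrow> bool"
    and C S :: "'m set"
    and SEM :: "'m \<Rightarrow> 'ty \<Rightarrow> 's set"
    and sem :: "'m \<Rightarrow> 'c fm \<Rightarrow> 's"
    and R :: "'c fm set"
  assumes "is_logic L"
    and "is_fragment_ops L Op'"
    and "LC_pair L sat C SEM sem"
    and "S \<subseteq> C" and "finite S"
    and "learning_property L sat S R"
    and "R \<inter> Fm_final (fragment L Op') \<noteq> {}"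
  shows "\<exists>\<psi>\<in>R \<inter> Fm_final (fragment L Op').
           sz \<psi> \<le> (\<Sum>\<tau>\<in>types L. \<Prod>M\<in>S. card (SEM M \<tau>))"
proof -
  let ?F = "R \<inter> Fm_final (fragment L Op')"
  define n where "n = (LEAST n. \<exists>\<psi>\<in>?F. sz \<psi> = n)"
  have ex: "\<exists>n. \<exists>\<psi>\<in>?F. sz \<psi> = n" using assms(7) by blast
  obtain \<psi> where psi: "\<psi> \<in> ?F" "sz \<psi> = n" using LeastI_ex[OF ex] unfolding n_def by blast
  have minim: "n \<le> sz \<phi>" if "\<phi> \<in> ?F" for \<phi> unfolding n_def using that by (blast intro: Least_le)
  obtain tf where tf: "tf \<in> ftypes L" "has_type (fragment L Op') \<psi> tf"
    using psi(1) unfolding Fm_final_def Fm_def by (auto simp: frag_simps)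
  define g where "g = (\<lambda>\<theta>. (otype L (hd_op \<theta>), restrict (\<lambda>M. sem M \<theta>) S))"
  define T where "T = Sigma (types L) (\<lambda>\<tau>. PiE S (\<lambda>M. SEM M \<tau>))"
  have noreduce: False if "a \<in> subformulas \<psi>" "b \<in> subformulas \<psi>" "a \<noteq> b"
      "a \<notin> subformulas b" "g a = g b" for a b
  proof -
    have gg: "otype L (hd_op a) = otype L (hd_op b) \<and> restrict (\<lambda>M. sem M a) S = restrict (\<lambda>M. sem M b) S"
      using \<open>g a = g b\<close> unfolding g_def by simp
    then have ty: "otype L (hd_op a) = otype L (hd_op b)" by blast
    have se: "\<forall>M\<in>S. sem M a = sem M b"
    proof
      fix M assume "M \<in> S"
      then show "sem M a = sem M b" using gg restrict_apply' by metis
    qed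
    have r: "rep a b \<psi> \<in> R \<and> has_type (fragment L Op') (rep a b \<psi>) tf \<and> sz (rep a b \<psi>) < sz \<psi>"
      using reduce[OF assms(6,3,4) _ tf(2) tf(1) that(1-4) ty se] psi(1) by blast
    then have "rep a b \<psi> \<in> ?F" using tf(1) unfolding Fm_final_def Fm_def by (auto simp: frag_simps)
    then have "n \<le> sz (rep a b \<psi>)" by (rule minim)
    then show False using r psi(2) by simp
  qed
  have inj: "inj_on g (subformulas \<psi>)"
  proof (rule inj_onI)
    fix x y assume xy: "x \<in> subformulas \<psi>" "y \<in> subformulas \<psi>" "g x = g y"
    show "x = y"
    proof (rule ccontr)
      assume ne: "x \<noteq> y"
      show False
      proof (cases "size y \<le> size x")
        case True
        then have "x \<notin> subformulas y" using sub_size ne by fastforce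
        then show False using noreduce[OF xy(1,2) ne] xy(3) by blast
      next
        case False
        then have "y \<notin> subformulas x" using sub_size ne by fastforce
        then show False using noreduce[OF xy(2,1)] ne xy(3) by metis
      qed
    qed
  qed
  have finT: "finite T" and finP: "\<And>\<tau>. \<tau> \<in> types L \<Longrightarrow> finite (PiE S (\<lambda>M. SEM M \<tau>))"
  proof -
    have fS: "finite (SEM M \<tau>)" if "M \<in> S" "\<tau> \<in> types L" for M \<tau>
    proof -
      have "LM_pair L (SEM M) (sem M)" using assms(3,4) that unfolding LC_pair_def by blast
      then have "finite (SEMs (SEM M) (types L))" unfolding LM_pair_def by blast
      then show ?thesis using that unfolding SEMs_def by (meson UN_I finite_subset subsetI)
    qed
    have ft: "finite (types L)" using assms(1) unfolding is_logic_def by blast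
    show fP: "\<And>\<tau>. \<tau> \<in> types L \<Longrightarrow> finite (PiE S (\<lambda>M. SEM M \<tau>))"
      using assms(5) fS by (intro finite_PiE) auto
    show "finite T" unfolding T_def using ft fP by (rule finite_SigmaI)
  qed
  have gT: "g ` subformulas \<psi> \<subseteq> T"
  proof
    fix z assume "z \<in> g ` subformulas \<psi>"
    then obtain x where x: "x \<in> subformulas \<psi>" "z = g x" by blast
    obtain s where s: "has_type (fragment L Op') x s" using sub_typed[OF tf(2) x(1)] by blast
    then have sL: "has_type L x s" by (rule frag_type)
    have s1: "s = otype L (hd_op x)" using type_head[OF sL] .
    have s2: "s \<in> types L" using typed_in_types[OF assms(1) sL] .
    have "sem M x \<in> SEM M s" if "M \<in> S" for M
    proof -
      have "LM_pair L (SEM M) (sem M)" using assms(3,4) that unfolding LC_pair_def by blast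
      then show ?thesis using sL s2 unfolding LM_pair_def by blast
    qed
    then show "z \<in> T" unfolding x(2) g_def T_def using s1 s2 by auto
  qed
  have "sz \<psi> = card (g ` subformulas \<psi>)" unfolding sz_def using card_image[OF inj] by simp
  also have "\<dots> \<le> card T" using gT finT by (rule card_mono[rotated])
  also have "card T = (\<Sum>\<tau>\<in>types L. \<Prod>M\<in>S. card (SEM M \<tau>))"
  proof -
    have "card T = (\<Sum>\<tau>\<in>types L. card (PiE S (\<lambda>M. SEM M \<tau>)))"
      unfolding T_def using assms(1) finP unfolding is_logic_def
      by (intro card_SigmaI) auto
    also have "\<dots> = (\<Sum>\<tau>\<in>types L. \<Prod>M\<in>S. card (SEM M \<tau>))"
      using assms(5) by (simp add: card_PiE)
    finally show ?thesis .
  qed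
  finally show ?thesis using psi(1) by blast
qed

end
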